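(* Let $N\ge2$ and $\mathcal M=(M_{ij})_{1\le i<j\le N}$ a family of real symmetric $2\times2$ matrices. If $Y=\Psi(\mathcal M)\in DD_N$, then $-\phi_{DD}(\mathcal M)\ge-\phi_{SDD}(\mathcal M)\ge -h(Y)$. Moreover, if $M_{ij}=\frac{1}{N-1}I_{2}$ for all $i<j$, then $Y=\Psi(\mathcal M)=I$ and $-\phi_{DD}(\mathcal M)=-\phi_{SDD}(\mathcal M)=-h(Y)=N(N-1)\log(N-1)$.
   Context: $\Psi(\mathcal M)=\sum_{i<j}\Psi_{ij}(M_{ij})$, where $\Psi_{ij}(M)$ is the $N\times N$ matrix whose entries $(i,i),(i,j),(j,i),(j,j)$ are $M(1,1),M(1,2),M(2,1),M(2,2)$ and whose other entries are $0$. $\phi_{DD}(\mathcal M)=\frac12\sum_{i<j}\big[\log(M_{ij}(1,1)^2-M_{ij}(1,2)^2)+\log(M_{ij}(2,2)^2-M_{ij}(1,2)^2)\big]$ with domain $\{M_{ij}(1,1)>|M_{ij}(1,2)|,\ M_{ij}(2,2)>|M_{ij}(1,2)|\ \forall i<j\}$; $\phi_{SDD}(\mathcal M)=\sum_{i<j}\log\big(M_{ij}(1,1)M_{ij}(2,2)-M_{ij}(1,2)^2\big)$ with domain $\{M_{ij}\succ0\}$; $h(Y)=(N-1)\log\det Y-N(N-1)\log(N-1)$ for $Y\succ0$; outside their domains these functions equal $-\infty$. $DD_N$: symmetric $X$ with $X(i,i)\ge\sum_{j\ne i}|X(i,j)|$ for all $i$; $SDD_N$: matrices $DYD$, $D$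 positive diagonal, $Y\in DD_N$. *)

theory Defs
  imports "HOL-Analysis.Analysis" "HOL-Library.Extended_Real"
begin

(* Index set {1..N} is modelled by a finite linearly ordered type 'n, N = CARD('n).
   A 2x2 matrix M is real^2^2 with entries M $ 1 $ 1, M $ 1 $ 2, M $ 2 $ 1, M $ 2 $ 2
   (in type 2, the indices 1 and 2 are the two distinct elements). *)

definition pairs :: "('n::{finite,linorder} \<times> 'n) set" where
  "pairs = {(i,j). i < j}"

definition Psi :: "('n::{finite,linorder} \<Rightarrow> 'n \<Rightarrow> real^2^2) \<Rightarrow> ((real,'n) vec, 'n) vec" where
  "Psi M = (\<chi> a b. \<Sum>(i,j)\<in>pairs.
      (if a = i \<and> b = i then M i j $ 1 $ 1
       else if a = i \<and> b = j then M i j $ 1 $ 2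
       else if a = j \<and> b = i then M i j $ 2 $ 1
       else if a = j \<and> b = j then M i j $ 2 $ 2
       else 0))"

definition sym_mat :: "real^'m^'m \<Rightarrow> bool" where
  "sym_mat A \<longleftrightarrow> transpose A = A"

definition pos_def :: "real^'m^'m \<Rightarrow> bool" where
  "pos_def A \<longleftrightarrow> sym_mat A \<and> (\<forall>x. x \<noteq> 0 \<longrightarrow> x \<bullet> (A *v x) > 0)"

definition DD :: "(real^'n^'n) set" where
  "DD = {X. sym_mat X \<and> (\<forall>i. X $ i $ i \<ge> (\<Sum>j\<in>UNIV - {i}. \<bar>X $ i $ j\<bar>))}"

definition phi_DD :: "('n::{finite,linorder} \<Rightarrow> 'n \<Rightarrow> real^2^2) \<Rightarrow> ereal" where
  "phi_DD M = (if (\<forall>(i,j)\<in>pairs. M i j $ 1 $ 1 > \<bar>M i j $ 1 $ 2\<bar> \<and> M i j $ 2 $ 2 > \<bar>M i j $ 1 $ 2\<bar>)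
     then ereal ((1/2) * (\<Sum>(i,j)\<in>pairs.
        ln ((M i j $ 1 $ 1)^2 - (M i j $ 1 $ 2)^2) + ln ((M i j $ 2 $ 2)^2 - (M i j $ 1 $ 2)^2)))
     else -\<infinity>)"

definition phi_SDD :: "('n::{finite,linorder} \<Rightarrow> 'n \<Rightarrow> real^2^2) \<Rightarrow> ereal" where
  "phi_SDD M = (if (\<forall>(i,j)\<in>pairs. pos_def (M i j))
     then ereal (\<Sum>(i,j)\<in>pairs. ln (M i j $ 1 $ 1 * M i j $ 2 $ 2 - (M i j $ 1 $ 2)^2))
     else -\<infinity>)"

definition h :: "real^'n^'n \<Rightarrow> ereal" where
  "h Y = (if pos_def Y
     then ereal ((real CARD('n) - 1) * ln (det Y)
                 - real CARD('n) * (real CARD('n) - 1) * ln (real CARD('n) - 1))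
     else -\<infinity>)"

end

theory Submission
  imports Defs
begin


lemma pd_diag_pos:
  fixes P :: "real^'n::finite^'n"
  assumes "pos_def P" shows "P$k$k > 0"
proof -
  have "axis k (1::real) \<noteq> 0" by simp
  then have "axis k 1 \<bullet> (P *v axis k 1) > 0" using assms unfolding pos_def_def by blast
  moreover have "axis k (1::real) \<bullet> (P *v axis k 1) = P$k$k"
    unfolding inner_axis' matrix_vector_mult_basis by (simp add: column_def)
  ultimately show ?thesis by simp
qed

lemma delta_l: "(\<Sum>b\<in>(UNIV::'a::finite set). (if a = b then 1 else 0) * f b) = (f a :: real)"
proof -
  have "(\<Sum>b\<in>UNIV. (if a = b then 1 else 0) * f b) = (\<Sum>b\<in>UNIV. (if a = b then f b else 0))"
    by (rule sum.cong) auto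
  then show ?thesis by simp
qed

lemma delta_r: "(\<Sum>b\<in>(UNIV::'a::finite set). f b * (if a = b then 1 else 0)) = (f a :: real)"
  using delta_l[of a f] by (simp add: mult.commute)

lemma delta2_l: "(\<Sum>b\<in>(UNIV::'a::finite set). (if a \<noteq> k \<and> b = k then t else 0) * f b) = (if a \<noteq> k then t * f k else (0::real))"
proof -
  have "(\<Sum>b\<in>UNIV. (if a \<noteq> k \<and> b = k then t else 0) * f b) = (\<Sum>b\<in>UNIV. (if b = k then (if a \<noteq> k then t * f k else 0) else 0))"
    by (rule sum.cong) auto
  then show ?thesis by simp
qed

lemma delta2_r: "(\<Sum>b\<in>(UNIV::'a::finite set). f b * (if a \<noteq> k \<and> b = k then t else 0)) = (if a \<noteq> k then t * f k else (0::real))"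
  using delta2_l[of a k t f] by (simp add: mult.commute)

definition Emat :: "real^'n^'n \<Rightarrow> 'n \<Rightarrow> real^'n^'n" where
  "Emat P k = (\<chi> a b. (if a = b then 1 else 0) + (if a \<noteq> k \<and> b = k then - (P$a$k / P$k$k) else 0))"

definition elim :: "real^'n^'n \<Rightarrow> 'n \<Rightarrow> real^'n^'n" where
  "elim P k = (\<chi> a b. if a = k \<and> b = k then P$k$k else if a = k \<or> b = k then 0
      else P$a$b - P$a$k * P$k$b / P$k$k)"

lemma det_Emat:
  fixes P :: "real^'n::finite^'n"
  shows "det (Emat P k) = 1"
proof -
  let ?I = "mat 1 :: real^'n^'n"
  define x where "x = (\<Sum>a\<in>UNIV - {k}. (- (P$a$k / P$k$k)) *s row a ?I)"
  have xs: "x \<in> vec.span {row j ?I |j. j \<noteq> k}"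
    unfolding x_def
  proof (rule vec.span_sum)
    fix a assume "a \<in> UNIV - {k}"
    then have "row a ?I \<in> {row j ?I |j. j \<noteq> k}" by auto
    then show "(- (P$a$k / P$k$k)) *s row a ?I \<in> vec.span {row j ?I |j. j \<noteq> k}"
      by (intro vec.span_scale vec.span_base)
  qed
  have "transpose (Emat P k) = (\<chi> r. if r = k then row k ?I + x else row r ?I)"
  proof -
    have r: "(row a ?I)$b = (if a = b then 1 else 0)" for a b :: 'n
      by (simp add: row_def mat_def)
    have xb: "x $ b = (if b \<noteq> k then - (P$b$k / P$k$k) else 0)" for b
    proof -
      have "x $ b = (\<Sum>a\<in>UNIV - {k}. (if b = a then - (P$a$k / P$k$k) else 0))"
        unfolding x_def sum_component vector_smult_component r
        by (rule sum.cong) auto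
      then show ?thesis by (simp add: sum.delta)
    qed
    show ?thesis
    proof (rule vec_eq_iff[THEN iffD2], rule allI, rule vec_eq_iff[THEN iffD2], rule allI)
      fix r c :: 'n
      show "transpose (Emat P k) $ r $ c = (\<chi> r. if r = k then row k ?I + x else row r ?I) $ r $ c"
        by (cases "r = k") (auto simp: transpose_def Emat_def r xb)
    qed
  qed
  then have "det (transpose (Emat P k)) = det ?I"
    using det_row_span[OF xs] by simp
  then show ?thesis by simp
qed

lemma mult_transpose_entry: "((A::real^'n::finite^'m) ** transpose B)$a$c = (\<Sum>b\<in>UNIV. A$a$b * B$c$b)"
  by (simp add: matrix_matrix_mult_def transpose_def)

lemma Emat_mul:
  fixes P :: "real^'n::finite^'n"
  assumes sym: "sym_mat P" and pk: "P$k$k \<noteq> 0"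
  shows "Emat P k ** P ** transpose (Emat P k) = elim P k"
proof -
  have s: "P$a$b = P$b$a" for a b using sym unfolding sym_mat_def
    by (metis transpose_def vec_lambda_beta)
  have EP: "(Emat P k ** P)$a$c = P$a$c + (if a \<noteq> k then - (P$a$k / P$k$k) * P$k$c else 0)" for a c
  proof -
    have "(Emat P k ** P)$a$c = (\<Sum>b\<in>UNIV. (if a = b then 1 else 0) * P$b$c)
       + (\<Sum>b\<in>UNIV. (if a \<noteq> k \<and> b = k then - (P$a$k / P$k$k) else 0) * P$b$c)"
      by (simp add: Emat_def matrix_matrix_mult_def distrib_right sum.distrib)
    then show ?thesis by (simp only: delta_l delta2_l)
  qed
  have EPE: "(Emat P k ** P ** transpose (Emat P k))$a$c = 
      (Emat P k ** P)$a$c + (if c \<noteq> k then - (P$c$k / P$k$k) * (Emat P k ** P)$a$k else 0)" for a c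
  proof -
    have "(Emat P k ** P ** transpose (Emat P k))$a$c = (\<Sum>b\<in>UNIV. (Emat P k ** P)$a$b * (if c = b then 1 else 0))
       + (\<Sum>b\<in>UNIV. (Emat P k ** P)$a$b * (if c \<noteq> k \<and> b = k then - (P$c$k / P$k$k) else 0))"
      unfolding mult_transpose_entry by (simp add: Emat_def distrib_left sum.distrib)
    then show ?thesis by (simp only: delta_r delta2_r)
  qed
  have EPk: "(Emat P k ** P)$a$k = (if a = k then P$k$k else 0)" for a
    unfolding EP using pk by simp
  have c1: "(Emat P k ** P ** transpose (Emat P k))$k$c = elim P k $ k $ c" for c
  proof -
    have "(Emat P k ** P ** transpose (Emat P k))$k$c = P$k$c + (if c \<noteq> k then - (P$c$k / P$k$k) * P$k$k else 0)"
      unfolding EPE EPk by (simp add: EP)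
    also have "\<dots> = elim P k $ k $ c"
      using pk s[of k c] by (simp add: elim_def)
    finally show ?thesis .
  qed
  have c2: "(Emat P k ** P ** transpose (Emat P k))$a$c = elim P k $ a $ c" if "a \<noteq> k" for a c
  proof -
    have "(Emat P k ** P ** transpose (Emat P k))$a$c = P$a$c - (P$a$k / P$k$k) * P$k$c"
      unfolding EPE EPk using that by (simp add: EP)
    also have "\<dots> = elim P k $ a $ c"
      using pk that by (simp add: elim_def)
    finally show ?thesis .
  qed
  show ?thesis
  proof (rule vec_eq_iff[THEN iffD2], rule allI, rule vec_eq_iff[THEN iffD2], rule allI)
    fix a c
    show "(Emat P k ** P ** transpose (Emat P k))$a$c = elim P k $ a $ c"
      using c1 c2 by (cases "a = k") simp_all
  qed
qed


lemma sym_entry: "sym_mat P \<Longrightarrow> P$a$b = P$b$a"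
  unfolding sym_mat_def by (metis transpose_def vec_lambda_beta)

lemma pos_def_congr:
  fixes P G :: "real^'n::finite^'n"
  assumes P: "pos_def P" and G: "det G \<noteq> 0"
  shows "pos_def (G ** P ** transpose G)"
  unfolding pos_def_def
proof (intro conjI allI impI)
  show "sym_mat (G ** P ** transpose G)"
    using P unfolding pos_def_def sym_mat_def
    by (simp add: matrix_transpose_mul matrix_mul_assoc)
  fix x :: "real^'n" assume x: "x \<noteq> 0"
  have inj: "inj ((*v) (transpose G))"
    using G by (intro inj_matrix_vector_mult) (simp add: invertible_det_nz)
  have "transpose G *v x \<noteq> 0"
  proof
    assume "transpose G *v x = 0"
    then have "transpose G *v x = transpose G *v 0" by simp
    with inj have "x = 0" by (meson injD)
    with x show False by simp
  qed
  then have "(transpose G *v x) \<bullet> (P *v (transpose G *v x)) > 0"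
    using P unfolding pos_def_def by blast
  moreover have "x \<bullet> ((G ** P ** transpose G) *v x) = (transpose G *v x) \<bullet> (P *v (transpose G *v x))"
  proof -
    have e: "(G ** P ** transpose G) *v x = G *v (P *v (transpose G *v x))"
      by (simp only: matrix_vector_mul_assoc matrix_mul_assoc)
    have "x \<bullet> (G *v w) = (transpose G *v x) \<bullet> w" for w
      by (simp add: dot_lmul_matrix[symmetric])
    then show ?thesis unfolding e by blast
  qed
  ultimately show "x \<bullet> ((G ** P ** transpose G) *v x) > 0" by simp
qed

lemma elim_pd:
  fixes P :: "real^'n::finite^'n"
  assumes "pos_def P"
  shows "pos_def (elim P k)" and "det (elim P k) = det P"
proof -
  have pk: "P$k$k \<noteq> 0" using pd_diag_pos[OF assms, of k] by simp
  have sy: "sym_mat P" using assms unfolding pos_def_def by simp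
  show "pos_def (elim P k)"
    using pos_def_congr[OF assms, of "Emat P k"] Emat_mul[OF sy pk] det_Emat[of P k] by simp
  show "det (elim P k) = det P"
  proof -
    have "det (elim P k) = det (Emat P k ** P ** transpose (Emat P k))"
      using Emat_mul[OF sy pk] by simp
    also have "\<dots> = det (Emat P k) * det P * det (transpose (Emat P k))"
      by (simp only: det_mul)
    also have "\<dots> = det P" by (simp add: det_Emat)
    finally show ?thesis .
  qed
qed

definition offs :: "real^'n^'n \<Rightarrow> 'n set" where
  "offs P = {a. \<exists>b. b \<noteq> a \<and> P$a$b \<noteq> 0}"

lemma hadamard:
  fixes P :: "real^'n::finite^'n"
  assumes "pos_def P"
  shows "0 < det P \<and> det P \<le> (\<Prod>i\<in>UNIV. P$i$i)"
  using assms
proof (induction "card (offs P)" arbitrary: P rule: less_induct)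
  case less
  have dpos: "\<And>i. 0 < P$i$i" by (rule pd_diag_pos[OF less.prems])
  show ?case
  proof (cases "offs P = {}")
    case True
    have "P$i$j = 0" if "i \<noteq> j" for i j
    proof (rule ccontr)
      assume "P$i$j \<noteq> 0"
      then have "i \<in> offs P" using that unfolding offs_def by auto
      with True show False by simp
    qed
    then have "det P = (\<Prod>i\<in>UNIV. P$i$i)"
      by (intro det_diagonal)
    moreover have "0 < (\<Prod>i\<in>UNIV. P$i$i)"
      by (rule prod_pos) (use dpos in blast)
    ultimately show ?thesis by simp
  next
    case False
    then obtain k where k: "k \<in> offs P" by blast
    define Q where "Q = elim P k"
    have Q1: "pos_def Q" and Q2: "det Q = det P" unfolding Q_def by (rule elim_pd[OF less.prems])+
    have sub: "offs Q \<subseteq> offs P - {k}"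
    proof
      fix a assume "a \<in> offs Q"
      then obtain b where b: "b \<noteq> a" "Q$a$b \<noteq> 0" unfolding offs_def by blast
      have ak: "a \<noteq> k"
      proof
        assume "a = k"
        then have "Q$a$b = 0" using b(1) unfolding Q_def elim_def by simp
        with b(2) show False by simp
      qed
      have bk: "b \<noteq> k"
      proof
        assume "b = k"
        then have "Q$a$b = 0" using ak unfolding Q_def elim_def by simp
        with b(2) show False by simp
      qed
      have "Q$a$b = P$a$b - P$a$k * P$k$b / P$k$k" using ak bk unfolding Q_def elim_def by simp
      then have "P$a$b \<noteq> 0 \<or> P$a$k \<noteq> 0" using b(2) by force
      then have "\<exists>c. c \<noteq> a \<and> P$a$c \<noteq> 0" using b(1) ak by metis
      then show "a \<in> offs P - {k}" using ak by (simp add: offs_def)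
    qed
    have "card (offs Q) < card (offs P)"
    proof (rule psubset_card_mono)
      show "finite (offs P)" by simp
      show "offs Q \<subset> offs P" using sub k by blast
    qed
    then have IH: "0 < det Q \<and> det Q \<le> (\<Prod>i\<in>UNIV. Q$i$i)"
      using less.hyps Q1 by blast
    have sy: "sym_mat P" using less.prems unfolding pos_def_def by simp
    have pk: "P$k$k > 0" by (rule dpos)
    have "(\<Prod>i\<in>UNIV. Q$i$i) \<le> (\<Prod>i\<in>UNIV. P$i$i)"
    proof (rule prod_mono, rule conjI)
      fix i :: 'n
      show "0 \<le> Q$i$i" using pd_diag_pos[OF Q1, of i] by linarith
      show "Q$i$i \<le> P$i$i"
      proof (cases "i = k")
        case True then show ?thesis unfolding Q_def elim_def by simp
      next
        case False
        have "P$i$k * P$k$i = (P$i$k)^2" using sym_entry[OF sy, of i k] by (simp add: power2_eq_square)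
        then have "P$i$k * P$k$i / P$k$k \<ge> 0" using pk by simp
        moreover have "Q$i$i = P$i$i - P$i$k * P$k$i / P$k$k" using False unfolding Q_def elim_def by simp
        ultimately show ?thesis by linarith
      qed
    qed
    then show ?thesis using IH Q2 by linarith
  qed
qed




lemma minor_pos:
  fixes S :: "real^'n::finite^'n"
  assumes S: "pos_def S" and ij: "i \<noteq> j"
  shows "S$i$i * S$j$j - (S$i$j)^2 > 0"
proof -
  have "elim S j $ i $ i > 0" using pd_diag_pos[OF elim_pd(1)[OF S]] by blast
  then have "S$i$i - S$i$j * S$j$i / S$j$j > 0" using ij by (simp add: elim_def)
  moreover have "S$j$i = S$i$j" using S sym_entry unfolding pos_def_def by metis
  moreover have "S$j$j > 0" using pd_diag_pos[OF S] by blast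
  ultimately have "(S$i$i - (S$i$j)^2 / S$j$j) * S$j$j > 0" by (simp add: power2_eq_square)
  then show ?thesis using \<open>S$j$j > 0\<close> by (simp add: algebra_simps)
qed

lemma szasz_step:
  fixes S :: "real^'n::finite^'n"
  assumes S: "pos_def S"
  shows "ln (det S) + (real CARD('n) - 2) * ln (S$k$k)
     \<le> (\<Sum>i\<in>UNIV - {k}. ln (S$i$i * S$k$k - (S$i$k)^2))"
proof -
  define Q where "Q = elim S k"
  have Q: "pos_def Q" "det Q = det S" unfolding Q_def using elim_pd[OF S] by auto
  have sk: "S$k$k > 0" using pd_diag_pos[OF S] by blast
  have sy: "S$i$k = S$k$i" for i using S sym_entry unfolding pos_def_def by metis
  have Qd: "Q$i$i = (S$i$i * S$k$k - (S$i$k)^2) / S$k$k" if "i \<noteq> k" for i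
    using that sk sy[of i] unfolding Q_def elim_def by (simp add: field_simps power2_eq_square)
  have Qpos: "Q$i$i > 0" for i using pd_diag_pos[OF Q(1)] by blast
  have H: "det S \<le> (\<Prod>i\<in>UNIV. Q$i$i)" and dp: "det S > 0" using hadamard[OF Q(1)] Q(2) by auto
  have "(\<Prod>i\<in>UNIV. Q$i$i) = Q$k$k * (\<Prod>i\<in>UNIV - {k}. Q$i$i)"
    by (simp add: prod.remove)
  also have "Q$k$k = S$k$k" unfolding Q_def elim_def by simp
  finally have "ln (det S) \<le> ln (S$k$k * (\<Prod>i\<in>UNIV - {k}. Q$i$i))"
    using H dp by simp
  also have "\<dots> = ln (S$k$k) + (\<Sum>i\<in>UNIV - {k}. ln (Q$i$i))"
  proof -
    have pp: "(\<Prod>i\<in>UNIV - {k}. Q$i$i) > 0" by (rule prod_pos) (use Qpos in auto)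
    have "ln (S$k$k * (\<Prod>i\<in>UNIV - {k}. Q$i$i)) = ln (S$k$k) + ln (\<Prod>i\<in>UNIV - {k}. Q$i$i)"
      by (rule ln_mult_pos[OF sk pp])
    also have "ln (\<Prod>i\<in>UNIV - {k}. Q$i$i) = (\<Sum>i\<in>UNIV - {k}. ln (Q$i$i))"
    proof (rule ln_prod)
      show "Q$i$i \<noteq> 0" for i using Qpos[of i] by simp
    qed simp
    finally show ?thesis .
  qed
  also have "(\<Sum>i\<in>UNIV - {k}. ln (Q$i$i)) = (\<Sum>i\<in>UNIV - {k}. ln (S$i$i * S$k$k - (S$i$k)^2) - ln (S$k$k))"
  proof (rule sum.cong)
    fix i assume "i \<in> UNIV - {k}"
    then have ik: "i \<noteq> k" by simp
    have mp: "S$i$i * S$k$k - (S$i$k)^2 > 0" using minor_pos[OF S ik] .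
    show "ln (Q$i$i) = ln (S$i$i * S$k$k - (S$i$k)^2) - ln (S$k$k)"
      unfolding Qd[OF ik] by (rule ln_divide_pos[OF mp sk])
  qed simp
  also have "\<dots> = (\<Sum>i\<in>UNIV - {k}. ln (S$i$i * S$k$k - (S$i$k)^2)) - (real CARD('n) - 1) * ln (S$k$k)"
    by (simp add: sum_subtractf card_Diff_singleton of_nat_diff)
  finally show ?thesis by (simp add: algebra_simps)
qed

lemma offdiag_sum:
  fixes g :: "'n::{finite,linorder} \<Rightarrow> 'n \<Rightarrow> real"
  assumes gs: "\<And>i j. g i j = g j i"
  shows "(\<Sum>k\<in>UNIV. \<Sum>i\<in>UNIV - {k}. g i k) = 2 * (\<Sum>(i,j)\<in>pairs. g i j)"
proof -
  have "(\<Sum>k\<in>UNIV. \<Sum>i\<in>UNIV - {k}. g i k) = (\<Sum>(k,i)\<in>Sigma UNIV (\<lambda>k. UNIV - {k}). g i k)"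
    by (rule sum.Sigma) auto
  also have "Sigma UNIV (\<lambda>k. UNIV - {k}) = pairs \<union> prod.swap ` pairs"
    unfolding pairs_def by (auto simp: image_iff)
  also have "(\<Sum>(k,i)\<in>pairs \<union> prod.swap ` pairs. g i k) = (\<Sum>(k,i)\<in>pairs. g i k) + (\<Sum>(k,i)\<in>prod.swap ` pairs. g i k)"
    by (rule sum.union_disjoint) (auto simp: pairs_def)
  also have "(\<Sum>(k,i)\<in>prod.swap ` pairs. g i k) = (\<Sum>(k,i)\<in>pairs. g k i)"
    by (subst sum.reindex) (auto simp: case_prod_beta)
  also have "(\<Sum>(k,i)\<in>pairs. g i k) = (\<Sum>(k,i)\<in>pairs. g k i)"
    using gs by (simp add: case_prod_beta)
  finally show ?thesis by simp
qed

lemma pair_sum_vertex: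
  fixes f :: "'n::{finite,linorder} \<Rightarrow> real"
  shows "(\<Sum>(i,j)\<in>pairs. f i + f j) = (real CARD('n) - 1) * (\<Sum>k\<in>UNIV. f k)"
proof -
  have "2 * (\<Sum>(i,j)\<in>pairs. f i + f j) = (\<Sum>k\<in>UNIV. \<Sum>i\<in>UNIV - {k}. f i + f k)"
    by (rule offdiag_sum[symmetric]) simp
  also have "\<dots> = (\<Sum>k\<in>UNIV. (sum f UNIV - f k) + (real CARD('n) - 1) * f k)"
    by (rule sum.cong) (simp_all add: sum.distrib sum_diff1 card_Diff_singleton of_nat_diff)
  also have "\<dots> = 2 * ((real CARD('n) - 1) * (\<Sum>k\<in>UNIV. f k))"
    by (simp add: sum.distrib sum_subtractf sum_distrib_left[symmetric] sum_distrib_right[symmetric] algebra_simps)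
  finally show ?thesis by simp
qed

lemma szasz:
  fixes S :: "((real, 'n::{finite,linorder}) vec, 'n) vec"
  assumes S: "pos_def S" and N2: "CARD('n) \<ge> 2"
  shows "(real CARD('n) - 1) * ln (det S) \<le> (\<Sum>(i,j)\<in>pairs. ln (S$i$i * S$j$j - (S$i$j)^2))"
proof -
  define n where "n = real CARD('n)"
  define x where "x = ln (det S)"
  define L where "L = (\<Sum>k\<in>UNIV. ln (S$k$k))"
  define P where "P = (\<Sum>(i,j)\<in>pairs. ln (S$i$i * S$j$j - (S$i$j)^2))"
  have sy: "S$i$j = S$j$i" for i j using S sym_entry unfolding pos_def_def by metis
  have "(\<Sum>k\<in>UNIV. ln (det S) + (n - 2) * ln (S$k$k))
      \<le> (\<Sum>k\<in>UNIV. \<Sum>i\<in>UNIV - {k}. ln (S$i$i * S$k$k - (S$i$k)^2))"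
    unfolding n_def by (rule sum_mono) (rule szasz_step[OF S])
  also have "\<dots> = 2 * P" unfolding P_def
    by (rule offdiag_sum) (simp add: sy mult.commute)
  finally have h1: "n * x + (n - 2) * L \<le> 2 * P"
    by (simp add: sum.distrib n_def x_def L_def sum_distrib_left)
  have "P \<le> (\<Sum>(i,j)\<in>pairs. ln (S$i$i) + ln (S$j$j))" unfolding P_def
  proof (rule sum_mono)
    fix p assume "p \<in> (pairs :: ('n \<times> 'n) set)"
    then obtain i j where p: "p = (i,j)" "i < j" unfolding pairs_def by auto
    have m: "S$i$i * S$j$j - (S$i$j)^2 > 0" using minor_pos[OF S] p(2) by simp
    have "S$i$i * S$j$j - (S$i$j)^2 \<le> S$i$i * S$j$j" by simp
    moreover have pos: "S$i$i * S$j$j > 0" using m zero_le_power2[of "S$i$j"] by linarith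
    ultimately have "ln (S$i$i * S$j$j - (S$i$j)^2) \<le> ln (S$i$i * S$j$j)" using m by (subst ln_le_cancel_iff) auto
    also have "\<dots> = ln (S$i$i) + ln (S$j$j)" by (rule ln_mult_pos) (rule pd_diag_pos[OF S])+
    finally show "(case p of (i, j) \<Rightarrow> ln (S$i$i * S$j$j - (S$i$j)^2)) \<le> (case p of (i, j) \<Rightarrow> ln (S$i$i) + ln (S$j$j))"
      using p by simp
  qed
  also have "\<dots> = (n - 1) * L" unfolding n_def L_def by (rule pair_sum_vertex)
  finally have h2: "P \<le> (n - 1) * L" .
  have n2: "n \<ge> 2" using N2 unfolding n_def by simp
  have h3: "(n - 2) * P \<le> (n - 2) * ((n - 1) * L)" using h2 n2 by (intro mult_left_mono) auto
  have h4: "(n - 1) * (n * x + (n - 2) * L) \<le> (n - 1) * (2 * P)" using h1 n2 by (intro mult_left_mono) auto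
  have "n * ((n - 1) * x) \<le> n * P"
    using h3 h4 by (simp add: algebra_simps)
  then have "(n - 1) * x \<le> P" using n2 by simp
  then show ?thesis unfolding n_def x_def P_def .
qed




lemma q2_pos:
  fixes a b d u v :: real
  assumes a: "a > 0" and m: "a * d - b^2 > 0"
  shows "a * u^2 + 2 * b * u * v + d * v^2 \<ge> 0"
    and "u \<noteq> 0 \<or> v \<noteq> 0 \<Longrightarrow> a * u^2 + 2 * b * u * v + d * v^2 > 0"
proof -
  have id: "a * (a * u^2 + 2 * b * u * v + d * v^2) = (a * u + b * v)^2 + (a * d - b^2) * v^2"
    by (simp add: algebra_simps power2_eq_square)
  have "(a * u + b * v)^2 + (a * d - b^2) * v^2 \<ge> 0" using m by simp
  then have "a * (a * u^2 + 2 * b * u * v + d * v^2) \<ge> 0" using id by simp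
  then show "a * u^2 + 2 * b * u * v + d * v^2 \<ge> 0" using a by (simp add: zero_le_mult_iff)
  assume uv: "u \<noteq> 0 \<or> v \<noteq> 0"
  show "a * u^2 + 2 * b * u * v + d * v^2 > 0"
  proof (cases "v = 0")
    case True
    then have "u \<noteq> 0" using uv by simp
    then show ?thesis using True a by simp
  next
    case False
    then have "(a * d - b^2) * v^2 > 0" using m by simp
    moreover have "(a * u + b * v)^2 \<ge> 0" by simp
    ultimately have "a * (a * u^2 + 2 * b * u * v + d * v^2) > 0" using id by linarith
    then show ?thesis using a by (simp add: zero_less_mult_iff)
  qed
qed

lemma quad2:
  fixes M :: "real^2^2" and x :: "real^2"
  assumes "sym_mat M"
  shows "x \<bullet> (M *v x) = M$1$1 * (x$1)^2 + 2 * M$1$2 * (x$1) * (x$2) + M$2$2 * (x$2)^2"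
proof -
  have "M$2$1 = M$1$2" using sym_entry[OF assms] by metis
  then show ?thesis
    by (simp add: inner_vec_def matrix_vector_mult_def sum_2 algebra_simps power2_eq_square)
qed

lemma pd2_iff:
  fixes M :: "real^2^2"
  assumes sy: "sym_mat M"
  shows "pos_def M \<longleftrightarrow> (M$1$1 > 0 \<and> M$1$1 * M$2$2 - (M$1$2)^2 > 0)"
proof
  assume "pos_def M"
  then show "M$1$1 > 0 \<and> M$1$1 * M$2$2 - (M$1$2)^2 > 0"
    using pd_diag_pos minor_pos[of M 1 2] by simp
next
  assume h: "M$1$1 > 0 \<and> M$1$1 * M$2$2 - (M$1$2)^2 > 0"
  show "pos_def M" unfolding pos_def_def
  proof (intro conjI allI impI)
    show "sym_mat M" by (rule sy)
    fix x :: "real^2" assume "x \<noteq> 0"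
    then have "x$1 \<noteq> 0 \<or> x$2 \<noteq> 0" by (metis exhaust_2 vec_eq_iff zero_index)
    then show "x \<bullet> (M *v x) > 0"
      unfolding quad2[OF sy] using q2_pos(2)[of "M$1$1" "M$2$2" "M$1$2" "x$1" "x$2"] h
      by (simp add: algebra_simps)
  qed
qed

lemma split4:
  assumes "i \<noteq> j"
  shows "(if a = i \<and> b = i then m11 else if a = i \<and> b = j then m12 else if a = j \<and> b = i then m21
          else if a = j \<and> b = j then m22 else 0) =
    (if a = i \<and> b = i then m11 else 0) + (if a = i \<and> b = j then m12 else 0)
    + (if a = j \<and> b = i then m21 else 0) + (if a = j \<and> b = j then m22 else (0::real))"
  using assms by auto

lemma dsum:
  fixes g :: "'n::finite \<Rightarrow> 'n \<Rightarrow> real"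
  shows "(\<Sum>a\<in>UNIV. \<Sum>b\<in>UNIV. g a b * (if a = i \<and> b = j then m else 0)) = g i j * m"
proof -
  have "(\<Sum>b\<in>UNIV. g a b * (if a = i \<and> b = j then m else 0)) = (if a = i then g a j * m else 0)" for a
  proof (cases "a = i")
    case True
    have "(\<Sum>b\<in>UNIV. g a b * (if a = i \<and> b = j then m else 0)) = (\<Sum>b\<in>UNIV. if b = j then g a b * m else 0)"
      by (rule sum.cong) (auto simp: True)
    then show ?thesis using True by simp
  next
    case False
    then show ?thesis by simp
  qed
  then show ?thesis by simp
qed

lemma Psi_bilin:
  fixes M :: "'n::{finite,linorder} \<Rightarrow> 'n \<Rightarrow> real^2^2" and g :: "'n \<Rightarrow> 'n \<Rightarrow> real"
  shows "(\<Sum>a\<in>UNIV. \<Sum>b\<in>UNIV. g a b * Psi M $ a $ b) =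
    (\<Sum>(i,j)\<in>pairs. g i i * M i j$1$1 + g i j * M i j$1$2 + g j i * M i j$2$1 + g j j * M i j$2$2)"
proof -
  define F where "F = (\<lambda>(i::'n,j::'n) a b. (if a = i \<and> b = i then M i j $ 1 $ 1
       else if a = i \<and> b = j then M i j $ 1 $ 2
       else if a = j \<and> b = i then M i j $ 2 $ 1
       else if a = j \<and> b = j then M i j $ 2 $ 2
       else 0))"
  have P: "Psi M $ a $ b = (\<Sum>p\<in>pairs. F p a b)" for a b
    unfolding Psi_def F_def by (simp add: case_prod_beta)
  have "(\<Sum>a\<in>UNIV. \<Sum>b\<in>UNIV. g a b * Psi M $ a $ b) = (\<Sum>a\<in>UNIV. \<Sum>b\<in>UNIV. \<Sum>p\<in>pairs. g a b * F p a b)"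
    unfolding P by (simp add: sum_distrib_left)
  also have "\<dots> = (\<Sum>a\<in>UNIV. \<Sum>p\<in>pairs. \<Sum>b\<in>UNIV. g a b * F p a b)"
    by (rule sum.cong[OF refl], rule sum.swap)
  also have "\<dots> = (\<Sum>p\<in>pairs. \<Sum>a\<in>UNIV. \<Sum>b\<in>UNIV. g a b * F p a b)"
    by (rule sum.swap)
  also have "\<dots> = (\<Sum>(i,j)\<in>pairs. g i i * M i j$1$1 + g i j * M i j$1$2 + g j i * M i j$2$1 + g j j * M i j$2$2)"
  proof (rule sum.cong[OF refl])
    fix p assume "p \<in> (pairs :: ('n \<times> 'n) set)"
    then obtain i j where p: "p = (i,j)" "i < j" unfolding pairs_def by auto
    then have ij: "i \<noteq> j" by simp
    have Fp: "F p a b = (if a = i \<and> b = i then M i j$1$1 else 0) + (if a = i \<and> b = j then M i j$1$2 else 0)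
      + (if a = j \<and> b = i then M i j$2$1 else 0) + (if a = j \<and> b = j then M i j$2$2 else 0)" for a b
      unfolding p F_def using split4[OF ij] by simp
    have "(\<Sum>a\<in>UNIV. \<Sum>b\<in>UNIV. g a b * F p a b) =
       (\<Sum>a\<in>UNIV. \<Sum>b\<in>UNIV. g a b * (if a = i \<and> b = i then M i j$1$1 else 0))
     + (\<Sum>a\<in>UNIV. \<Sum>b\<in>UNIV. g a b * (if a = i \<and> b = j then M i j$1$2 else 0))
     + (\<Sum>a\<in>UNIV. \<Sum>b\<in>UNIV. g a b * (if a = j \<and> b = i then M i j$2$1 else 0))
     + (\<Sum>a\<in>UNIV. \<Sum>b\<in>UNIV. g a b * (if a = j \<and> b = j then M i j$2$2 else 0))"
      unfolding Fp by (simp add: distrib_left sum.distrib)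
    also have "\<dots> = g i i * M i j$1$1 + g i j * M i j$1$2 + g j i * M i j$2$1 + g j j * M i j$2$2"
      by (simp only: dsum)
    finally show "(\<Sum>a\<in>UNIV. \<Sum>b\<in>UNIV. g a b * F p a b) =
      (case p of (i,j) \<Rightarrow> g i i * M i j$1$1 + g i j * M i j$1$2 + g j i * M i j$2$1 + g j j * M i j$2$2)"
      using p by simp
  qed
  finally show ?thesis .
qed




lemma swap4:
  assumes "i \<noteq> j" "m21 = m12"
  shows "(if b = i \<and> a = i then m11 else if b = i \<and> a = j then m12 else if b = j \<and> a = i then m21
          else if b = j \<and> a = j then m22 else (0::real)) =
         (if a = i \<and> b = i then m11 else if a = i \<and> b = j then m12 else if a = j \<and> b = i then m21
          else if a = j \<and> b = j then m22 else 0)"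
  using assms by (cases "a = i"; cases "b = i"; cases "a = j"; cases "b = j") simp_all

lemma Psi_sym:
  fixes M :: "'n::{finite,linorder} \<Rightarrow> 'n \<Rightarrow> real^2^2"
  assumes symM: "\<forall>i j. i < j \<longrightarrow> sym_mat (M i j)"
  shows "sym_mat (Psi M)"
  unfolding sym_mat_def
proof (rule vec_eq_iff[THEN iffD2], rule allI, rule vec_eq_iff[THEN iffD2], rule allI)
  fix a b :: 'n
  have "Psi M $ b $ a = Psi M $ a $ b"
    unfolding Psi_def vec_lambda_beta
  proof (rule sum.cong[OF refl])
    fix p assume "p \<in> (pairs :: ('n \<times> 'n) set)"
    then obtain i j where p: "p = (i,j)" "i < j" unfolding pairs_def by auto
    have "sym_mat (M i j)" using symM p(2) by blast
    then have "M i j $ 2 $ 1 = M i j $ 1 $ 2" by (rule sym_entry)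
    then show "(case p of (i, j) \<Rightarrow> if b = i \<and> a = i then M i j $ 1 $ 1 else if b = i \<and> a = j then M i j $ 1 $ 2
              else if b = j \<and> a = i then M i j $ 2 $ 1 else if b = j \<and> a = j then M i j $ 2 $ 2 else 0) =
          (case p of (i, j) \<Rightarrow> if a = i \<and> b = i then M i j $ 1 $ 1 else if a = i \<and> b = j then M i j $ 1 $ 2
              else if a = j \<and> b = i then M i j $ 2 $ 1 else if a = j \<and> b = j then M i j $ 2 $ 2 else 0)"
      unfolding p(1) using swap4[of i j "M i j $ 2 $ 1" "M i j $ 1 $ 2"] p(2) by simp
  qed
  then show "transpose (Psi M) $ a $ b = Psi M $ a $ b" by (simp add: transpose_def)
qed

lemma Psi_pd:
  fixes M :: "'n::{finite,linorder} \<Rightarrow> 'n \<Rightarrow> real^2^2"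
  assumes N2: "CARD('n) \<ge> 2"
    and symM: "\<forall>i j. i < j \<longrightarrow> sym_mat (M i j)"
    and pdM: "\<forall>i j. i < j \<longrightarrow> pos_def (M i j)"
  shows "pos_def (Psi M)"
  unfolding pos_def_def
proof (intro conjI allI impI)
  show "sym_mat (Psi M)" by (rule Psi_sym[OF symM])
  fix x :: "(real, 'n) vec" assume x: "x \<noteq> 0"
  define q where "q = (\<lambda>(i::'n,j::'n). M i j$1$1 * (x$i)^2 + 2 * M i j$1$2 * x$i * x$j + M i j$2$2 * (x$j)^2)"
  have ent: "M i j$1$1 > 0 \<and> M i j$1$1 * M i j$2$2 - (M i j$1$2)^2 > 0" if "i < j" for i j
    using pd2_iff[of "M i j"] symM pdM that by blast
  have "x \<bullet> (Psi M *v x) = (\<Sum>a\<in>UNIV. x$a * (\<Sum>b\<in>UNIV. Psi M $ a $ b * x$b))"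
    by (simp add: inner_vec_def matrix_vector_mult_def)
  also have "\<dots> = (\<Sum>a\<in>UNIV. \<Sum>b\<in>UNIV. (x$a * x$b) * Psi M $ a $ b)"
    unfolding sum_distrib_left by (rule sum.cong[OF refl], rule sum.cong[OF refl]) (simp add: mult_ac)
  also have "\<dots> = (\<Sum>p\<in>pairs. q p)"
    unfolding Psi_bilin
  proof (rule sum.cong[OF refl])
    fix p assume "p \<in> (pairs :: ('n \<times> 'n) set)"
    then obtain i j where p: "p = (i,j)" "i < j" unfolding pairs_def by auto
    have "sym_mat (M i j)" using symM p(2) by blast
    then have "M i j $ 2 $ 1 = M i j $ 1 $ 2" by (rule sym_entry)
    then show "(case p of (i,j) \<Rightarrow> x$i * x$i * M i j$1$1 + x$i * x$j * M i j$1$2 + x$j * x$i * M i j$2$1 + x$j * x$j * M i j$2$2) = q p"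
      unfolding q_def p by (simp add: algebra_simps power2_eq_square)
  qed
  also have "\<dots> > 0"
  proof -
    have "\<exists>a. x$a \<noteq> 0"
    proof (rule ccontr)
      assume "\<not> (\<exists>a. x$a \<noteq> 0)"
      then have "x = 0" by (simp add: vec_eq_iff)
      with x show False by simp
    qed
    then obtain a where a: "x$a \<noteq> 0" by blast
    obtain b where b: "b \<noteq> a"
    proof (cases "\<exists>b. b \<noteq> a")
      case True then show ?thesis using that by blast
    next
      case False
      then have "UNIV = {a}" by auto
      then have "card (UNIV::'n set) = card {a}" by (simp only:)
      then have "CARD('n) = 1" by simp
      with N2 show ?thesis by simp
    qed
    define p where "p = (min a b, max a b)"
    have pp: "p \<in> pairs" unfolding p_def pairs_def using b by (auto simp: min_def max_def)
    have "q p > 0"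
    proof -
      have mm: "min a b < max a b" using b by (auto simp: min_def max_def)
      have "x $ min a b \<noteq> 0 \<or> x $ max a b \<noteq> 0" using a by (auto simp: min_def max_def)
      then show ?thesis unfolding p_def q_def using ent[OF mm] q2_pos(2)[of "M (min a b) (max a b)$1$1" "M (min a b) (max a b)$2$2" "M (min a b) (max a b)$1$2" "x $ min a b" "x $ max a b"]
        by simp
    qed
    moreover have "q p' \<ge> 0" if pp': "p' \<in> pairs" for p'
    proof -
      obtain i j where p': "p' = (i,j)" "i < j" using pp' unfolding pairs_def by auto
      show ?thesis unfolding p' q_def using ent[OF p'(2)] q2_pos(1)[of "M i j$1$1" "M i j$2$2" "M i j$1$2" "x$i" "x$j"] by simp
    qed
    ultimately show ?thesis by (intro sum_pos2[OF _ pp]) auto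
  qed
  finally show "x \<bullet> (Psi M *v x) > 0" .
qed

lemma two_by_two:
  fixes p q s a b d :: real
  assumes p: "p > 0" and S: "p * q - s^2 > 0" and a: "a > 0" and M: "a * d - b^2 > 0"
  shows "p * a + 2 * s * b + q * d > 0"
    and "4 * (p * q - s^2) * (a * d - b^2) \<le> (p * a + 2 * s * b + q * d)^2"
proof -
  have id: "p^2 * ((p * a + 2 * s * b + q * d)^2 - 4 * (p * q - s^2) * (a * d - b^2))
     = (p^2 * a + 2 * p * s * b + (2 * s^2 - p * q) * d)^2 + 4 * (p * q - s^2) * (p * b + s * d)^2"
    by algebra
  have "(p^2 * a + 2 * p * s * b + (2 * s^2 - p * q) * d)^2 + 4 * (p * q - s^2) * (p * b + s * d)^2 \<ge> 0"
    using S by simp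
  then have "p^2 * ((p * a + 2 * s * b + q * d)^2 - 4 * (p * q - s^2) * (a * d - b^2)) \<ge> 0" using id by simp
  then have "(p * a + 2 * s * b + q * d)^2 - 4 * (p * q - s^2) * (a * d - b^2) \<ge> 0"
    using p by (simp add: zero_le_mult_iff)
  then show "4 * (p * q - s^2) * (a * d - b^2) \<le> (p * a + 2 * s * b + q * d)^2" by simp
  have d: "d > 0"
  proof (rule ccontr)
    assume "\<not> d > 0"
    then have "a * d \<le> 0" using a by (simp add: mult_nonpos_nonneg not_less mult_le_0_iff)
    then show False using M zero_le_power2[of b] by linarith
  qed
  have e1: "a * p^2 + 2 * b * p * s + d * s^2 \<ge> 0" by (rule q2_pos(1)[OF a M])
  have "p * (p * a + 2 * s * b + q * d) = (a * p^2 + 2 * b * p * s + d * s^2) + (p * q - s^2) * d"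
    by (simp add: algebra_simps power2_eq_square)
  also have "\<dots> > 0" using e1 S d by (simp add: add_nonneg_pos)
  finally show "p * a + 2 * s * b + q * d > 0" using p by (simp add: zero_less_mult_iff)
qed




lemma card_pairs_real:
  fixes M :: "'n::{finite,linorder} \<Rightarrow> 'n \<Rightarrow> real^2^2"
  shows "real (card (pairs :: ('n \<times> 'n) set)) = real CARD('n) * (real CARD('n) - 1) / 2"
proof -
  have "(\<Sum>(i,j)\<in>(pairs :: ('n \<times> 'n) set). (1/2::real) + 1/2) = (real CARD('n) - 1) * (\<Sum>k\<in>(UNIV::'n set). 1/2)"
    by (rule pair_sum_vertex)
  then show ?thesis by (simp add: case_prod_beta algebra_simps)
qed

lemma main_ineq:
  fixes M :: "'n::{finite,linorder} \<Rightarrow> 'n \<Rightarrow> real^2^2"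
  assumes N2: "CARD('n) \<ge> 2"
    and symM: "\<forall>i j. i < j \<longrightarrow> sym_mat (M i j)"
    and pdM: "\<forall>i j. i < j \<longrightarrow> pos_def (M i j)"
  shows "(\<Sum>(i,j)\<in>pairs. ln (M i j$1$1 * M i j$2$2 - (M i j$1$2)^2))
    \<le> (real CARD('n) - 1) * ln (det (Psi M)) - real CARD('n) * (real CARD('n) - 1) * ln (real CARD('n) - 1)"
proof -
  define n where "n = real CARD('n)"
  define Y where "Y = Psi M"
  have n2: "n \<ge> 2" using N2 unfolding n_def by simp
  have Y: "pos_def Y" unfolding Y_def by (rule Psi_pd[OF N2 symM pdM])
  have dY: "det Y > 0" using hadamard[OF Y] by simp
  have "invertible Y" using dY by (simp add: invertible_det_nz)
  then obtain S where YS: "Y ** S = mat 1" and SY: "S ** Y = mat 1" unfolding invertible_def by blast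
  have symY: "transpose Y = Y" using Y unfolding pos_def_def sym_mat_def by simp
  have "Y ** transpose S = mat 1"
  proof -
    have "transpose (S ** Y) = mat 1" using SY by simp
    then show ?thesis by (simp add: matrix_transpose_mul symY)
  qed
  then have tS: "transpose S = S"
    by (metis SY matrix_mul_assoc matrix_mul_lid matrix_mul_rid)
  have S: "pos_def S" unfolding pos_def_def
  proof (intro conjI allI impI)
    show "sym_mat S" unfolding sym_mat_def by (rule tS)
    fix x :: "(real, 'n) vec" assume x: "x \<noteq> 0"
    define z where "z = S *v x"
    have xz: "Y *v z = x" unfolding z_def by (simp add: matrix_vector_mul_assoc YS)
    have "z \<noteq> 0" using x xz by auto
    then have "z \<bullet> (Y *v z) > 0" using Y unfolding pos_def_def by blast
    moreover have "x \<bullet> (S *v x) = z \<bullet> (Y *v z)"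
    proof -
      have "x \<bullet> (S *v x) = x \<bullet> z" by (simp add: z_def)
      also have "\<dots> = (Y *v z) \<bullet> z" using xz by simp
      also have "\<dots> = z \<bullet> (Y *v z)" by (rule inner_commute)
      finally show ?thesis .
    qed
    ultimately show "x \<bullet> (S *v x) > 0" by simp
  qed
  have dS: "det S > 0" using hadamard[OF S] by simp
  have "det S * det Y = 1" using SY by (metis det_I det_mul)
  then have lnS: "ln (det S) = - ln (det Y)"
    using ln_mult_pos[OF dS dY] by simp
  have sS: "S$i$j = S$j$i" for i j using tS by (metis sym_entry sym_mat_def)
  have sM: "M i j $ 2 $ 1 = M i j $ 1 $ 2" if "i < j" for i j
  proof -
    have "sym_mat (M i j)" using symM that by blast
    then show ?thesis by (rule sym_entry)
  qed
  define xp where "xp = (\<lambda>(i::'n,j::'n). S$i$i * M i j$1$1 + 2 * S$i$j * M i j$1$2 + S$j$j * M i j$2$2)"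
  define al where "al = (\<lambda>(i::'n,j::'n). S$i$i * S$j$j - (S$i$j)^2)"
  define be where "be = (\<lambda>(i::'n,j::'n). M i j$1$1 * M i j$2$2 - (M i j$1$2)^2)"
  have "(\<Sum>a\<in>UNIV. \<Sum>b\<in>UNIV. S$a$b * Y$b$a) = (\<Sum>a\<in>(UNIV::'n set). 1)"
  proof (rule sum.cong[OF refl])
    fix a :: 'n
    have "(S ** Y)$a$a = 1" using SY by (simp add: mat_def)
    then show "(\<Sum>b\<in>UNIV. S$a$b * Y$b$a) = 1" by (simp add: matrix_matrix_mult_def)
  qed
  then have tr1: "(\<Sum>b\<in>UNIV. \<Sum>a\<in>UNIV. (\<lambda>u v. S$v$u) b a * Y$b$a) = n"
    unfolding n_def by (subst sum.swap) simp
  have xsum: "(\<Sum>p\<in>pairs. xp p) = n"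
  proof -
    have "(\<Sum>p\<in>pairs. xp p) = (\<Sum>b\<in>UNIV. \<Sum>a\<in>UNIV. (\<lambda>u v. S$v$u) b a * Y$b$a)"
      unfolding Y_def Psi_bilin
    proof (rule sum.cong[OF refl])
      fix p assume "p \<in> (pairs :: ('n \<times> 'n) set)"
      then obtain i j where p: "p = (i,j)" "i < j" unfolding pairs_def by auto
      show "xp p = (case p of (i,j) \<Rightarrow> S$i$i * M i j$1$1 + S$j$i * M i j$1$2 + S$i$j * M i j$2$1 + S$j$j * M i j$2$2)"
        unfolding p xp_def using sM[OF p(2)] sS[of j i] by (simp add: algebra_simps)
    qed
    then show ?thesis using tr1 by simp
  qed
  have pos: "xp p > 0 \<and> al p > 0 \<and> be p > 0 \<and> 4 * al p * be p \<le> (xp p)^2" if pp: "p \<in> pairs" for p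
  proof -
    obtain i j where p: "p = (i,j)" "i < j" using pp unfolding pairs_def by auto
    have a1: "S$i$i > 0" using pd_diag_pos[OF S] by blast
    have a2: "S$i$i * S$j$j - (S$i$j)^2 > 0" using minor_pos[OF S] p(2) by simp
    have b12: "M i j$1$1 > 0 \<and> M i j$1$1 * M i j$2$2 - (M i j$1$2)^2 > 0"
      using pd2_iff[of "M i j"] symM pdM p(2) by blast
    show ?thesis unfolding p xp_def al_def be_def
      using two_by_two[OF a1 a2 conjunct1[OF b12] conjunct2[OF b12]] a2 b12 by simp
  qed
  have lnb: "ln (be p) \<le> 2 * ln (xp p) - ln 4 - ln (al p)" if "p \<in> pairs" for p
  proof -
    have h: "xp p > 0" "al p > 0" "be p > 0" "4 * al p * be p \<le> (xp p)^2" using pos[OF that] by auto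
    have "be p \<le> (xp p)^2 / (4 * al p)" using h by (simp add: field_simps)
    then have "ln (be p) \<le> ln ((xp p)^2 / (4 * al p))" using h by (subst ln_le_cancel_iff) auto
    also have "\<dots> = ln ((xp p)^2) - ln (4 * al p)" using h by (intro ln_divide_pos) auto
    also have "\<dots> = 2 * ln (xp p) - ln 4 - ln (al p)" using h by (simp add: ln_realpow ln_mult_pos)
    finally show ?thesis .
  qed
  define m where "m = 2 / (n - 1)"
  have m: "m > 0" unfolding m_def using n2 by simp
  define K where "K = real (card (pairs :: ('n \<times> 'n) set))"
  have K: "K = n * (n - 1) / 2" unfolding K_def n_def by (rule card_pairs_real)
  have lnx: "ln (xp p) \<le> ln m + xp p / m - 1" if "p \<in> pairs" for p
  proof -
    have xpos: "xp p > 0" using pos[OF that] by simp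
    have "ln (xp p / m) \<le> xp p / m - 1" using xpos m by (intro ln_le_minus_one) simp
    moreover have "ln (xp p / m) = ln (xp p) - ln m" using xpos m by (rule ln_divide_pos)
    ultimately show ?thesis by simp
  qed
  have sx: "(\<Sum>p\<in>pairs. ln (xp p)) \<le> K * ln m"
  proof -
    have "(\<Sum>p\<in>pairs. ln (xp p)) \<le> (\<Sum>p\<in>pairs. ln m + xp p / m - 1)"
      by (rule sum_mono) (rule lnx)
    also have "\<dots> = K * ln m + n / m - K"
      unfolding K_def using xsum by (simp add: sum.distrib sum_subtractf sum_divide_distrib[symmetric])
    also have "n / m = K" unfolding K m_def using n2 by (simp add: field_simps)
    finally show ?thesis by simp
  qed
  have "(\<Sum>p\<in>pairs. ln (be p)) \<le> (\<Sum>p\<in>pairs. 2 * ln (xp p) - ln 4 - ln (al p))"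
    by (rule sum_mono) (rule lnb)
  also have "\<dots> = 2 * (\<Sum>p\<in>pairs. ln (xp p)) - K * ln 4 - (\<Sum>p\<in>pairs. ln (al p))"
    unfolding K_def by (simp add: sum_subtractf sum_distrib_left)
  also have "\<dots> \<le> 2 * (K * ln m) - K * ln 4 - (\<Sum>p\<in>pairs. ln (al p))"
    using sx by simp
  also have "(\<Sum>p\<in>pairs. ln (al p)) \<ge> (n - 1) * ln (det S)"
    unfolding al_def n_def using szasz[OF S N2] by (simp add: case_prod_beta)
  then have "2 * (K * ln m) - K * ln 4 - (\<Sum>p\<in>pairs. ln (al p)) \<le> 2 * (K * ln m) - K * ln 4 - (n - 1) * ln (det S)"
    by simp
  also have "2 * (K * ln m) - K * ln 4 = - n * (n - 1) * ln (n - 1)"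
  proof -
    have l4: "ln (4::real) = 2 * ln 2" using ln_realpow[of 2 2] by simp
    have lm: "ln m = ln 2 - ln (n - 1)" unfolding m_def using n2 by (intro ln_divide_pos) auto
    show ?thesis unfolding l4 lm K by (simp add: field_simps)
  qed
  finally have "(\<Sum>p\<in>pairs. ln (be p)) \<le> - n * (n - 1) * ln (n - 1) - (n - 1) * ln (det S)" by simp
  moreover have "(\<Sum>p\<in>pairs. ln (be p)) = (\<Sum>(i,j)\<in>pairs. ln (M i j$1$1 * M i j$2$2 - (M i j$1$2)^2))"
    unfolding be_def by (simp add: case_prod_beta)
  ultimately show ?thesis unfolding Y_def[symmetric] n_def[symmetric] lnS by (simp add: algebra_simps)
qed




lemma ball_pairs: "(\<forall>(i,j)\<in>pairs. P i j) \<longleftrightarrow> (\<forall>i j. i < j \<longrightarrow> P i j)"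
  unfolding pairs_def by auto

lemma dd_vs_sdd:
  fixes a b d :: real
  assumes "a > \<bar>b\<bar>" "d > \<bar>b\<bar>"
  shows "a > 0" "a * d - b^2 > 0"
    and "(1/2) * (ln (a^2 - b^2) + ln (d^2 - b^2)) \<le> ln (a * d - b^2)"
proof -
  show a0: "a > 0" using assms by linarith
  have "\<bar>b\<bar> * \<bar>b\<bar> < a * d" using assms by (intro mult_strict_mono) auto
  then show C: "a * d - b^2 > 0" by (simp add: power2_eq_square abs_mult_self)
  have A: "a^2 - b^2 > 0"
  proof -
    have "\<bar>b\<bar> * \<bar>b\<bar> < a * a" using assms by (intro mult_strict_mono) auto
    then show ?thesis by (simp add: power2_eq_square abs_mult_self)
  qed
  have B: "d^2 - b^2 > 0"
  proof -
    have "\<bar>b\<bar> * \<bar>b\<bar> < d * d" using assms by (intro mult_strict_mono) auto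
    then show ?thesis by (simp add: power2_eq_square abs_mult_self)
  qed
  have "(a * d - b^2)^2 - (a^2 - b^2) * (d^2 - b^2) = b^2 * (a - d)^2"
    by (simp add: algebra_simps power2_eq_square)
  then have le: "(a^2 - b^2) * (d^2 - b^2) \<le> (a * d - b^2)^2" by (simp add: algebra_simps)
  have "ln (a^2 - b^2) + ln (d^2 - b^2) = ln ((a^2 - b^2) * (d^2 - b^2))"
    using A B by (simp add: ln_mult_pos)
  also have "\<dots> \<le> ln ((a * d - b^2)^2)"
    using le A B C by (subst ln_le_cancel_iff) auto
  also have "\<dots> = 2 * ln (a * d - b^2)" by (simp add: ln_realpow)
  finally show "(1/2) * (ln (a^2 - b^2) + ln (d^2 - b^2)) \<le> ln (a * d - b^2)" by simp
qed

theorem corollary4p5: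
  fixes M :: "'n::{finite,linorder} \<Rightarrow> 'n \<Rightarrow> real^2^2"
  assumes N2: "CARD('n) \<ge> 2"
    and symM: "\<forall>i j. i < j \<longrightarrow> sym_mat (M i j)"
  shows "(Psi M \<in> DD \<longrightarrow> - phi_DD M \<ge> - phi_SDD M \<and> - phi_SDD M \<ge> - h (Psi M))
    \<and> ((\<forall>i j. i < j \<longrightarrow> M i j = (1 / (real CARD('n) - 1)) *\<^sub>R mat 1) \<longrightarrow>
        Psi M = mat 1 \<and> - phi_DD M = - phi_SDD M \<and> - phi_SDD M = - h (Psi M)
        \<and> - h (Psi M) = ereal (real CARD('n) * (real CARD('n) - 1) * ln (real CARD('n) - 1)))"
proof (intro conjI impI)
  have sM: "M i j $ 2 $ 1 = M i j $ 1 $ 2" if "i < j" for i j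
  proof -
    have "sym_mat (M i j)" using symM that by blast
    then show ?thesis by (rule sym_entry)
  qed
  have A: "phi_DD M \<le> phi_SDD M"
  proof (cases "\<forall>(i,j)\<in>pairs. M i j $ 1 $ 1 > \<bar>M i j $ 1 $ 2\<bar> \<and> M i j $ 2 $ 2 > \<bar>M i j $ 1 $ 2\<bar>")
    case True
    then have T: "M i j $ 1 $ 1 > \<bar>M i j $ 1 $ 2\<bar> \<and> M i j $ 2 $ 2 > \<bar>M i j $ 1 $ 2\<bar>" if "i < j" for i j
      using that unfolding ball_pairs by blast
    have pd: "\<forall>(i,j)\<in>pairs. pos_def (M i j)"
      unfolding ball_pairs
    proof (intro allI impI)
      fix i j :: 'n assume ij: "i < j"
      show "pos_def (M i j)"
        using pd2_iff[of "M i j"] symM ij dd_vs_sdd(1,2)[of "M i j $ 1 $ 2" "M i j $ 1 $ 1" "M i j $ 2 $ 2"] T[OF ij]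
        by blast
    qed
    have "(1/2) * (\<Sum>(i,j)\<in>pairs. ln ((M i j $ 1 $ 1)^2 - (M i j $ 1 $ 2)^2) + ln ((M i j $ 2 $ 2)^2 - (M i j $ 1 $ 2)^2))
       \<le> (\<Sum>(i,j)\<in>pairs. ln (M i j $ 1 $ 1 * M i j $ 2 $ 2 - (M i j $ 1 $ 2)^2))"
      unfolding sum_distrib_left
    proof (rule sum_mono)
      fix p assume pp: "p \<in> (pairs :: ('n \<times> 'n) set)"
      then obtain i j where p: "p = (i,j)" "i < j" unfolding pairs_def by auto
      show "(1/2) * (case p of (i,j) \<Rightarrow> ln ((M i j $ 1 $ 1)^2 - (M i j $ 1 $ 2)^2) + ln ((M i j $ 2 $ 2)^2 - (M i j $ 1 $ 2)^2))
        \<le> (case p of (i,j) \<Rightarrow> ln (M i j $ 1 $ 1 * M i j $ 2 $ 2 - (M i j $ 1 $ 2)^2))"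
        unfolding p using dd_vs_sdd(3) T[OF p(2)] by simp
    qed
    then show ?thesis unfolding phi_DD_def phi_SDD_def using True pd by simp
  next
    case False
    have "phi_DD M = -\<infinity>" unfolding phi_DD_def using False by (rule if_not_P)
    then show ?thesis by simp
  qed
  have B: "phi_SDD M \<le> h (Psi M)"
  proof (cases "\<forall>(i,j)\<in>pairs. pos_def (M i j)")
    case True
    then have pdM: "\<forall>i j. i < j \<longrightarrow> pos_def (M i j)" unfolding ball_pairs by blast
    have "pos_def (Psi M)" by (rule Psi_pd[OF N2 symM pdM])
    then show ?thesis unfolding phi_SDD_def h_def using True main_ineq[OF N2 symM pdM] by simp
  next
    case False
    have "phi_SDD M = -\<infinity>" unfolding phi_SDD_def using False by (rule if_not_P)
    then show ?thesis by simp
  qed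
  assume "Psi M \<in> DD"
  show "- phi_DD M \<ge> - phi_SDD M" using A by simp
  show "- phi_SDD M \<ge> - h (Psi M)" using B by simp
next
  assume Mid: "\<forall>i j. i < j \<longrightarrow> M i j = (1 / (real CARD('n) - 1)) *\<^sub>R mat 1"
  define n where "n = real CARD('n)"
  define c where "c = 1 / (n - 1)"
  have n2: "n \<ge> 2" using N2 unfolding n_def by simp
  have c: "c > 0" unfolding c_def using n2 by simp
  have Me: "M i j $ 1 $ 1 = c" "M i j $ 2 $ 2 = c" "M i j $ 1 $ 2 = 0" "M i j $ 2 $ 1 = 0" if "i < j" for i j
    using Mid that unfolding c_def n_def by (auto simp: mat_def)
  define K where "K = real (card (pairs :: ('n \<times> 'n) set))"
  have K: "K = n * (n - 1) / 2" unfolding K_def n_def by (rule card_pairs_real)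
  have lnc: "ln (c * c) = - 2 * ln (n - 1)"
    unfolding c_def using n2 by (simp add: ln_mult_pos ln_div)
  have val: "K * ln (c * c) = - n * (n - 1) * ln (n - 1)" unfolding K lnc by (simp add: field_simps)
  show PsiI: "Psi M = mat 1"
  proof (rule vec_eq_iff[THEN iffD2], rule allI, rule vec_eq_iff[THEN iffD2], rule allI)
    fix a b :: 'n
    have "Psi M $ a $ b = (\<Sum>(i,j)\<in>pairs. (if a = b then c * ((if i = a then 1 else 0) + (if j = a then 1 else 0)) else 0))"
      unfolding Psi_def vec_lambda_beta
    proof (rule sum.cong[OF refl])
      fix p assume "p \<in> (pairs :: ('n \<times> 'n) set)"
      then obtain i j where p: "p = (i,j)" "i < j" unfolding pairs_def by auto
      show "(case p of (i, j) \<Rightarrow> if a = i \<and> b = i then M i j $ 1 $ 1 else if a = i \<and> b = j then M i j $ 1 $ 2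
              else if a = j \<and> b = i then M i j $ 2 $ 1 else if a = j \<and> b = j then M i j $ 2 $ 2 else 0) =
            (case p of (i,j) \<Rightarrow> (if a = b then c * ((if i = a then 1 else 0) + (if j = a then 1 else 0)) else 0))"
        unfolding p using Me[OF p(2)] p(2)
        by (cases "a = b"; cases "a = i"; cases "a = j"; cases "b = i"; cases "b = j") simp_all
    qed
    also have "\<dots> = mat 1 $ a $ b"
    proof (cases "a = b")
      case True
      have "(\<Sum>(i,j)\<in>pairs. c * ((if i = a then 1 else 0) + (if j = a then 1 else 0)))
          = c * (\<Sum>(i,j)\<in>pairs. (if i = a then 1 else 0) + (if j = a then 1 else (0::real)))"
        by (simp add: sum_distrib_left case_prod_beta)
      also have "(\<Sum>(i,j)\<in>pairs. (if i = a then 1 else 0) + (if j = a then 1 else (0::real)))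
          = (n - 1) * (\<Sum>k\<in>UNIV. if k = a then 1 else 0)"
        unfolding n_def by (rule pair_sum_vertex)
      finally show ?thesis using True n2 by (simp add: mat_def c_def)
    next
      case False
      then show ?thesis by (simp add: mat_def)
    qed
    finally show "Psi M $ a $ b = mat 1 $ a $ b" .
  qed
  have dd: "phi_DD M = ereal (K * ln (c * c))"
  proof -
    have cond: "\<forall>(i,j)\<in>pairs. M i j $ 1 $ 1 > \<bar>M i j $ 1 $ 2\<bar> \<and> M i j $ 2 $ 2 > \<bar>M i j $ 1 $ 2\<bar>"
      unfolding ball_pairs using Me c by simp
    have "(\<Sum>(i,j)\<in>pairs. ln ((M i j $ 1 $ 1)^2 - (M i j $ 1 $ 2)^2) + ln ((M i j $ 2 $ 2)^2 - (M i j $ 1 $ 2)^2))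
        = (\<Sum>(i,j)\<in>(pairs :: ('n \<times> 'n) set). 2 * ln (c * c))"
    proof (rule sum.cong[OF refl])
      fix p assume "p \<in> (pairs :: ('n \<times> 'n) set)"
      then obtain i j where p: "p = (i,j)" "i < j" unfolding pairs_def by auto
      show "(case p of (i,j) \<Rightarrow> ln ((M i j $ 1 $ 1)^2 - (M i j $ 1 $ 2)^2) + ln ((M i j $ 2 $ 2)^2 - (M i j $ 1 $ 2)^2))
          = (case p of (i,j) \<Rightarrow> 2 * ln (c * c))"
        unfolding p using Me[OF p(2)] by (simp add: power2_eq_square)
    qed
    then show ?thesis unfolding phi_DD_def K_def using cond by (simp add: case_prod_beta)
  qed
  have sdd: "phi_SDD M = ereal (K * ln (c * c))"
  proof -
    have cond: "\<forall>(i,j)\<in>pairs. pos_def (M i j)"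
      unfolding ball_pairs using Me c pd2_iff symM by simp
    have "(\<Sum>(i,j)\<in>pairs. ln (M i j $ 1 $ 1 * M i j $ 2 $ 2 - (M i j $ 1 $ 2)^2))
        = (\<Sum>(i,j)\<in>(pairs :: ('n \<times> 'n) set). ln (c * c))"
    proof (rule sum.cong[OF refl])
      fix p assume "p \<in> (pairs :: ('n \<times> 'n) set)"
      then obtain i j where p: "p = (i,j)" "i < j" unfolding pairs_def by auto
      show "(case p of (i,j) \<Rightarrow> ln (M i j $ 1 $ 1 * M i j $ 2 $ 2 - (M i j $ 1 $ 2)^2))
          = (case p of (i,j) \<Rightarrow> ln (c * c))"
        unfolding p using Me[OF p(2)] by simp
    qed
    then show ?thesis unfolding phi_SDD_def K_def using cond by (simp add: case_prod_beta)
  qed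
  have hI: "h (Psi M) = ereal (- n * (n - 1) * ln (n - 1))"
  proof -
    have "pos_def (mat 1 :: ((real, 'n) vec, 'n) vec)"
      unfolding pos_def_def sym_mat_def by (auto simp: matrix_vector_mul_lid)
    then show ?thesis unfolding PsiI h_def n_def by simp
  qed
  show "- phi_DD M = - phi_SDD M" unfolding dd sdd ..
  show "- phi_SDD M = - h (Psi M)" unfolding sdd hI val ..
  show "- h (Psi M) = ereal (real CARD('n) * (real CARD('n) - 1) * ln (real CARD('n) - 1))"
    unfolding hI n_def by simp
qed


end
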